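(* Let $A(\chi)$ be the $n\times n$ matrix over the field of rational functions in indeterminates $\chi_1,\dots,\chi_n,\hbar,q_1,\dots,q_n$ with $A_{ii}=\chi_i$ and $A_{ij}=\frac{\hbar(1-q_i)(1+q_j)}{(1-q_i/q_j)(1-q_iq_j)}$ for $i\ne j$. For $\sigma\in\mathfrak S_n$ put $m_\sigma=A_{1\sigma(1)}\cdots A_{n\sigma(n)}$. Then $$\det A(\chi)=\sum_\sigma(-1)^{\ell(\sigma)}m_\sigma,$$ where the sum runs only over those permutations $\sigma$ all of whose nontrivial cycles have even length. Consequently $\det A(\chi)=(-1)^n\det A(-\chi)$, where $A(-\chi)$ denotes $A(\chi)$ with each $\chi_i$ replaced by $-\chi_i$.
   Context: $\ell(\sigma)$ denotes the number of inversions of $\sigma$, so $(-1)^{\ell(\sigma)}$ is its sign. *)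

theory Defs
  imports "HOL-Analysis.Analysis" "HOL-Combinatorics.Orbits"
begin

definition Amat :: "('n::finite \<Rightarrow> 'a::field) \<Rightarrow> 'a \<Rightarrow> ('n \<Rightarrow> 'a) \<Rightarrow> 'a^'n^'n" where
  "Amat chi hbar q = (\<chi> i j. if i = j then chi i
      else hbar * (1 - q i) * (1 + q j) / ((1 - q i / q j) * (1 - q i * q j)))"

definition all_cycles_even :: "('n \<Rightarrow> 'n) \<Rightarrow> bool" where
  "all_cycles_even p \<longleftrightarrow> (\<forall>i. p i \<noteq> i \<longrightarrow> even (card (orbit p i)))"

end

theory Submission
  imports Defs "HOL-Library.Disjoint_Sets"
begin

lemma perm_univ: "\<sigma> permutes (UNIV::'n::finite set) \<Longrightarrow> permutation \<sigma>"
  by (rule permutes_imp_permutation[OF finite])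

lemma orb_closed: "permutation \<sigma> \<Longrightarrow> y \<in> orbit \<sigma> x \<Longrightarrow> \<sigma> y \<in> orbit \<sigma> x"
  by (rule cyclic_on_inI[OF cyclic_on_orbit'])

lemma orb_eq: "permutation \<sigma> \<Longrightarrow> y \<in> orbit \<sigma> x \<Longrightarrow> orbit \<sigma> y = orbit \<sigma> x"
  by (rule orbit_cyclic_eq3[OF cyclic_on_orbit'])

lemma orb_inv_closed: "permutation \<sigma> \<Longrightarrow> y \<in> orbit \<sigma> x \<Longrightarrow> inv \<sigma> y \<in> orbit \<sigma> x"
proof -
  assume P: "permutation \<sigma>" and y: "y \<in> orbit \<sigma> x"
  have Pi: "permutation (inv \<sigma>)" using P by (rule permutation_inverse)
  have e: "orbit (inv \<sigma>) x = orbit \<sigma> x" using P by (rule orbit_inv_eq)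
  show ?thesis using orb_closed[OF Pi, of y x] y unfolding e by simp
qed

lemma orb_out: "permutation \<sigma> \<Longrightarrow> i \<notin> orbit \<sigma> x \<Longrightarrow> \<sigma> i \<notin> orbit \<sigma> x"
proof
  assume P: "permutation \<sigma>" and i: "i \<notin> orbit \<sigma> x" and si: "\<sigma> i \<in> orbit \<sigma> x"
  have "orbit \<sigma> (\<sigma> i) = orbit \<sigma> x" using orb_eq[OF P si] .
  moreover have "orbit \<sigma> (\<sigma> i) = orbit \<sigma> i" using permutation_orbit_step[OF P] .
  moreover have "i \<in> orbit \<sigma> i" using permutation_self_in_orbit[OF P] .
  ultimately show False using i by simp
qed

lemma orb_nofix: "permutation \<sigma> \<Longrightarrow> \<sigma> x \<noteq> x \<Longrightarrow> y \<in> orbit \<sigma> x \<Longrightarrow> \<sigma> y \<noteq> y"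
proof
  assume P: "permutation \<sigma>" and nf: "\<sigma> x \<noteq> x" and y: "y \<in> orbit \<sigma> x" and fy: "\<sigma> y = y"
  have "orbit \<sigma> y = {y}" using fy orbit_eq_singleton_iff by metis
  moreover have "orbit \<sigma> y = orbit \<sigma> x" using orb_eq[OF P y] .
  moreover have "x \<in> orbit \<sigma> x" using permutation_self_in_orbit[OF P] .
  ultimately have "x = y" by simp
  then show False using nf fy by simp
qed

locale odd_cyc =
  fixes \<sigma> :: "'n::finite \<Rightarrow> 'n" and x :: 'n and C :: "'n set" and t :: "'n \<Rightarrow> 'n"
  assumes perm: "\<sigma> permutes UNIV" and nf: "\<sigma> x \<noteq> x" and od: "odd (card (orbit \<sigma> x))"
    and C_def: "C = orbit \<sigma> x" and t_def: "t = (\<lambda>i. if i \<in> C then inv \<sigma> i else \<sigma> i)"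
begin

lemma P: "permutation \<sigma>" by (rule perm_univ[OF perm])

lemma inv1: "\<sigma> (inv \<sigma> y) = y" and inv2: "inv \<sigma> (\<sigma> y) = y"
  using permutes_inverses[OF perm] by auto

lemma inC: "y \<in> C \<Longrightarrow> \<sigma> y \<in> C" "y \<in> C \<Longrightarrow> inv \<sigma> y \<in> C"
  "y \<notin> C \<Longrightarrow> \<sigma> y \<notin> C" "y \<notin> C \<Longrightarrow> inv \<sigma> y \<notin> C"
proof -
  show "y \<in> C \<Longrightarrow> \<sigma> y \<in> C" unfolding C_def by (rule orb_closed[OF P])
  show "y \<in> C \<Longrightarrow> inv \<sigma> y \<in> C" unfolding C_def by (rule orb_inv_closed[OF P])
  show "y \<notin> C \<Longrightarrow> \<sigma> y \<notin> C" unfolding C_def by (rule orb_out[OF P])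
  show "y \<notin> C \<Longrightarrow> inv \<sigma> y \<notin> C"
  proof
    assume "y \<notin> C" "inv \<sigma> y \<in> C"
    then have "\<sigma> (inv \<sigma> y) \<in> C" unfolding C_def by (rule_tac orb_closed[OF P]) simp
    then show False using \<open>y \<notin> C\<close> inv1 by simp
  qed
qed

lemma t_perm: "t permutes UNIV"
proof -
  define t' where "t' = (\<lambda>i. if i \<in> C then \<sigma> i else inv \<sigma> i)"
  have "t \<circ> t' = id" "t' \<circ> t = id" unfolding t_def t'_def
    using inC inv1 inv2 by (auto simp: fun_eq_iff)
  then have "bij t" using o_bij by blast
  then show ?thesis by (intro bij_imp_permutes) auto
qed

lemma sign_t: "sign t = sign \<sigma>"
proof -
  define c where "c = (\<lambda>i. if i \<in> C then \<sigma> i else i)"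
  define c' where "c' = (\<lambda>i. if i \<in> C then inv \<sigma> i else i)"
  have "c \<circ> c' = id" "c' \<circ> c = id" unfolding c_def c'_def
    using inC inv1 inv2 by (auto simp: fun_eq_iff)
  then have "bij c" using o_bij by blast
  then have cp: "permutation c" by (intro perm_univ bij_imp_permutes) auto
  have tp: "permutation t" by (rule perm_univ[OF t_perm])
  have eq: "\<sigma> = t \<circ> (c \<circ> c)" unfolding t_def c_def
    using inC inv1 inv2 by (auto simp: fun_eq_iff)
  have "sign \<sigma> = sign t * (sign c * sign c)"
    by (subst eq) (simp add: sign_compose tp cp permutation_compose)
  also have "sign c * sign c = 1" by (simp add: sign_def)
  finally show ?thesis by simp
qed

lemma fix_t: "(t i \<noteq> i) \<longleftrightarrow> (\<sigma> i \<noteq> i)"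
proof -
  have "(inv \<sigma> i = i) \<longleftrightarrow> (\<sigma> i = i)"
  proof
    assume "inv \<sigma> i = i" then have "\<sigma> (inv \<sigma> i) = \<sigma> i" by simp
    then show "\<sigma> i = i" using inv1 by simp
  next
    assume "\<sigma> i = i" then have "inv \<sigma> (\<sigma> i) = inv \<sigma> i" by simp
    then show "inv \<sigma> i = i" using inv2 by simp
  qed
  then show ?thesis unfolding t_def by simp
qed

lemma orbit_t: "orbit t i = orbit \<sigma> i"
proof (cases "i \<in> C")
  case True
  have Pi: "permutation (inv \<sigma>)" by (rule permutation_inverse[OF P])
  have "orbit t i = orbit (inv \<sigma>) i"
  proof (rule orbit_cong)
    show "i \<in> orbit (inv \<sigma>) i" using permutation_self_in_orbit[OF Pi] .
    fix s assume "s \<in> orbit (inv \<sigma>) i"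
    then have "s \<in> orbit \<sigma> i" using orbit_inv_eq[OF P] by simp
    then have "s \<in> orbit \<sigma> x" using orb_eq[OF P, of i x] True C_def by simp
    then have "s \<in> C" using C_def by simp
    then show "t s = inv \<sigma> s" unfolding t_def by simp
  qed
  then show ?thesis using orbit_inv_eq[OF P] by simp
next
  case False
  show ?thesis
  proof (rule orbit_cong)
    show "i \<in> orbit \<sigma> i" using permutation_self_in_orbit[OF P] .
    fix s assume "s \<in> orbit \<sigma> i"
    have "s \<notin> C"
    proof
      assume "s \<in> C"
      then have e1: "orbit \<sigma> s = C" using orb_eq[OF P, of s x] C_def by simp
      have e2: "orbit \<sigma> s = orbit \<sigma> i" using orb_eq[OF P \<open>s \<in> orbit \<sigma> i\<close>] .
      have "i \<in> orbit \<sigma> i" using permutation_self_in_orbit[OF P] .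
      then have "i \<in> orbit \<sigma> s" by (simp only: e2)
      then have "i \<in> C" by (simp only: e1)
      then show False using False by simp
    qed
    then show "t s = \<sigma> s" unfolding t_def by simp
  qed
qed

lemma C_nofix: "y \<in> C \<Longrightarrow> \<sigma> y \<noteq> y"
  using orb_nofix[OF P nf] C_def by simp

lemma t_back: "(\<lambda>i. if i \<in> C then inv t i else t i) = \<sigma>"
proof
  fix i
  show "(if i \<in> C then inv t i else t i) = \<sigma> i"
  proof (cases "i \<in> C")
    case True
    have "t (\<sigma> i) = i" unfolding t_def using inC(1)[OF True] inv2 by simp
    have "inv t (t (\<sigma> i)) = \<sigma> i" by (rule permutes_inverses(2)[OF t_perm])
    then show ?thesis using True \<open>t (\<sigma> i) = i\<close> by simp
  next
    case False
    then show ?thesis unfolding t_def by simp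
  qed
qed

lemma t_neq: "t \<noteq> \<sigma>"
proof
  assume "t = \<sigma>"
  have xC: "x \<in> C" using C_def permutation_self_in_orbit[OF P] by simp
  have "t x = \<sigma> x" using \<open>t = \<sigma>\<close> by simp
  then have "inv \<sigma> x = \<sigma> x" using xC unfolding t_def by simp
  then have "\<sigma> (\<sigma> x) = x" using inv1[of x] by simp
  then have h: "(\<sigma> ^^ 2) x = x" by (simp add: numeral_2_eq_2)
  have "orbit \<sigma> x = {(\<sigma> ^^ m) x | m. m < 2}" using orbit_altdef_bounded[OF h] by simp
  also have "\<dots> = {x, \<sigma> x}"
  proof
    show "{(\<sigma> ^^ m) x | m. m < 2} \<subseteq> {x, \<sigma> x}" by (auto simp: less_2_cases_iff)
    have "x = (\<sigma> ^^ 0) x" by simp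
    moreover have "\<sigma> x = (\<sigma> ^^ 1) x" by simp
    ultimately show "{x, \<sigma> x} \<subseteq> {(\<sigma> ^^ m) x | m. m < 2}" by fastforce
  qed
  finally have "card (orbit \<sigma> x) = 2" using nf by simp
  then show False using od by simp
qed

lemma prod_t:
  fixes M :: "'n \<Rightarrow> 'n \<Rightarrow> 'a::comm_ring_1"
  assumes M: "\<And>i j. i \<noteq> j \<Longrightarrow> M i j = h * F i * G j * E i j"
    and E: "\<And>i j. E j i = - E i j"
  shows "(\<Prod>i\<in>UNIV. M i (t i)) = - (\<Prod>i\<in>UNIV. M i (\<sigma> i))"
proof -
  have bC: "bij_betw \<sigma> C C"
  proof -
    have "inj_on \<sigma> C" using permutes_inj[OF perm] inj_on_subset by blast
    moreover have "\<sigma> ` C = C"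
    proof
      show "\<sigma> ` C \<subseteq> C" using inC(1) by blast
      show "C \<subseteq> \<sigma> ` C"
      proof
        fix y assume "y \<in> C"
        then have "inv \<sigma> y \<in> C" by (rule inC(2))
        then show "y \<in> \<sigma> ` C" using inv1[of y] by (metis image_eqI)
      qed
    qed
    ultimately show ?thesis by (simp add: bij_betw_def)
  qed
  have oddC: "odd (card C)" using od C_def by simp
  have "(\<Prod>i\<in>C. M i (t i)) = (\<Prod>i\<in>C. M i (inv \<sigma> i))" unfolding t_def by simp
  also have "\<dots> = (\<Prod>j\<in>C. M (\<sigma> j) (inv \<sigma> (\<sigma> j)))"
    using prod.reindex_bij_betw[OF bC, of "\<lambda>i. M i (inv \<sigma> i)"] by simp
  also have "\<dots> = (\<Prod>j\<in>C. (-1) * (h * F (\<sigma> j) * G j * E j (\<sigma> j)))"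
  proof (rule prod.cong)
    fix j assume "j \<in> C"
    then have "\<sigma> j \<noteq> j" by (rule C_nofix)
    then show "M (\<sigma> j) (inv \<sigma> (\<sigma> j)) = (-1) * (h * F (\<sigma> j) * G j * E j (\<sigma> j))"
      using M[of "\<sigma> j" j] E[of j "\<sigma> j"] inv2 by simp
  qed simp
  also have "\<dots> = (\<Prod>j\<in>C. (-1::'a)) * ((\<Prod>j\<in>C. h) * (\<Prod>j\<in>C. F (\<sigma> j)) * (\<Prod>j\<in>C. G j) * (\<Prod>j\<in>C. E j (\<sigma> j)))"
    by (simp only: prod.distrib)
  also have "(\<Prod>j\<in>C. F (\<sigma> j)) = (\<Prod>j\<in>C. F j)"
    using prod.reindex_bij_betw[OF bC, of F] by simp
  also have "(\<Prod>j\<in>C. G j) = (\<Prod>j\<in>C. G (\<sigma> j))"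
    using prod.reindex_bij_betw[OF bC, of G] by simp
  also have "(\<Prod>j\<in>C. (-1::'a)) = -1" using oddC by simp
  also have "(\<Prod>j\<in>C. h) * (\<Prod>j\<in>C. F j) * (\<Prod>j\<in>C. G (\<sigma> j)) * (\<Prod>j\<in>C. E j (\<sigma> j))
      = (\<Prod>j\<in>C. M j (\<sigma> j))"
  proof -
    have "(\<Prod>j\<in>C. M j (\<sigma> j)) = (\<Prod>j\<in>C. h * F j * G (\<sigma> j) * E j (\<sigma> j))"
    proof (rule prod.cong)
      fix j assume "j \<in> C"
      then have "\<sigma> j \<noteq> j" by (rule C_nofix)
      then show "M j (\<sigma> j) = h * F j * G (\<sigma> j) * E j (\<sigma> j)" using M[of j "\<sigma> j"] by metis
    qed simp
    then show ?thesis by (simp add: prod.distrib)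
  qed
  finally have 1: "(\<Prod>i\<in>C. M i (t i)) = - (\<Prod>j\<in>C. M j (\<sigma> j))" by simp
  have 2: "(\<Prod>i\<in>UNIV - C. M i (t i)) = (\<Prod>j\<in>UNIV - C. M j (\<sigma> j))"
    unfolding t_def by simp
  have "(\<Prod>i\<in>UNIV. M i (t i)) = (\<Prod>i\<in>UNIV \<inter> C. M i (t i)) * (\<Prod>i\<in>UNIV - C. M i (t i))"
    by (rule prod.Int_Diff) simp
  also have "\<dots> = - ((\<Prod>i\<in>UNIV \<inter> C. M i (\<sigma> i)) * (\<Prod>i\<in>UNIV - C. M i (\<sigma> i)))"
    using 1 2 by simp
  also have "(\<Prod>i\<in>UNIV \<inter> C. M i (\<sigma> i)) * (\<Prod>i\<in>UNIV - C. M i (\<sigma> i)) = (\<Prod>i\<in>UNIV. M i (\<sigma> i))"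
    by (rule prod.Int_Diff[symmetric]) simp
  finally show ?thesis .
qed

end


lemma cancel_sum:
  fixes M :: "'n::finite \<Rightarrow> 'n \<Rightarrow> 'a::comm_ring_1"
  assumes M: "\<And>i j. i \<noteq> j \<Longrightarrow> M i j = h * F i * G j * E i j"
    and E: "\<And>i j. E j i = - E i j"
  shows "(\<Sum>\<sigma>\<in>{\<sigma>. \<sigma> permutes (UNIV::'n set) \<and> \<not> all_cycles_even \<sigma>}.
            of_int (sign \<sigma>) * (\<Prod>i\<in>UNIV. M i (\<sigma> i))) = 0"
proof -
  define N where "N = {\<sigma>. \<sigma> permutes (UNIV::'n set) \<and> \<not> all_cycles_even \<sigma>}"
  define Sx where "Sx \<sigma> = {i. \<sigma> i \<noteq> i \<and> odd (card (orbit \<sigma> i))}" for \<sigma> :: "'n \<Rightarrow> 'n"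
  define xx where "xx \<sigma> = (SOME x. x \<in> Sx \<sigma>)" for \<sigma>
  define T where "T \<sigma> = (\<lambda>i. if i \<in> orbit \<sigma> (xx \<sigma>) then inv \<sigma> i else \<sigma> i)" for \<sigma>
  define f where "f \<sigma> = of_int (sign \<sigma>) * (\<Prod>i\<in>UNIV. M i (\<sigma> i))" for \<sigma>
  have key: "odd_cyc \<sigma> (xx \<sigma>) (orbit \<sigma> (xx \<sigma>)) (T \<sigma>)" if "\<sigma> \<in> N" for \<sigma>
  proof -
    from that have p: "\<sigma> permutes UNIV" and ne: "\<not> all_cycles_even \<sigma>" unfolding N_def by auto
    from ne obtain i where "i \<in> Sx \<sigma>" unfolding all_cycles_even_def Sx_def by auto
    then have "xx \<sigma> \<in> Sx \<sigma>" unfolding xx_def by (rule someI)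
    then show ?thesis unfolding odd_cyc_def Sx_def T_def using p by auto
  qed
  have props: "T \<sigma> \<in> N \<and> T (T \<sigma>) = \<sigma> \<and> T \<sigma> \<noteq> \<sigma> \<and> f (T \<sigma>) + f \<sigma> = 0" if "\<sigma> \<in> N" for \<sigma>
  proof -
    interpret oc: odd_cyc \<sigma> "xx \<sigma>" "orbit \<sigma> (xx \<sigma>)" "T \<sigma>" using key[OF that] .
    have SxT: "Sx (T \<sigma>) = Sx \<sigma>" unfolding Sx_def using oc.fix_t oc.orbit_t by simp
    then have xxT: "xx (T \<sigma>) = xx \<sigma>" unfolding xx_def by simp
    have "T (T \<sigma>) = (\<lambda>i. if i \<in> orbit \<sigma> (xx \<sigma>) then inv (T \<sigma>) i else T \<sigma> i)"
      unfolding T_def[of "T \<sigma>"] xxT oc.orbit_t ..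
    also have "\<dots> = \<sigma>" by (rule oc.t_back)
    finally have TT: "T (T \<sigma>) = \<sigma>" .
    have "xx \<sigma> \<in> Sx \<sigma>"
    proof -
      from that obtain i where "i \<in> Sx \<sigma>" unfolding N_def all_cycles_even_def Sx_def by auto
      then show ?thesis unfolding xx_def by (rule someI)
    qed
    then have "xx \<sigma> \<in> Sx (T \<sigma>)" using SxT by simp
    then have "\<not> all_cycles_even (T \<sigma>)" unfolding Sx_def all_cycles_even_def by auto
    then have TN: "T \<sigma> \<in> N" unfolding N_def using oc.t_perm by simp
    have "f (T \<sigma>) = - f \<sigma>" unfolding f_def oc.sign_t using oc.prod_t[of M h F G E, OF M E] by simp
    then show ?thesis using TN TT oc.t_neq by simp
  qed
  have "(\<Sum>\<sigma>\<in>N. f \<sigma>) = 0"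
    by (rule sum_involution_eq_0[where h = T]) (use props in auto)
  then show ?thesis unfolding N_def f_def .
qed

lemma entry_form:
  fixes chi :: "'n::finite \<Rightarrow> 'a::field" and hbar :: 'a and q :: "'n \<Rightarrow> 'a"
  assumes "\<And>i j. i \<noteq> j \<Longrightarrow> q j \<noteq> 0 \<and> q i \<noteq> q j \<and> q i * q j \<noteq> 1"
    and "i \<noteq> j"
  shows "Amat chi hbar q $ i $ j = hbar * (1 - q i) * (q j * (1 + q j)) * inverse ((q j - q i) * (1 - q i * q j))"
proof -
  from assms have a: "q j \<noteq> 0" "q j - q i \<noteq> 0" "1 - q i * q j \<noteq> 0" by auto
  have "1 - q i / q j = (q j - q i) / q j" using a by (simp add: field_simps)
  then show ?thesis unfolding Amat_def using assms(2) a by (simp add: field_simps)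
qed

lemma det_even:
  fixes chi :: "'n::finite \<Rightarrow> 'a::field" and hbar :: 'a and q :: "'n \<Rightarrow> 'a"
  assumes "\<And>i j. i \<noteq> j \<Longrightarrow> q j \<noteq> 0 \<and> q i \<noteq> q j \<and> q i * q j \<noteq> 1"
  shows "det (Amat chi hbar q) =
           (\<Sum>\<sigma>\<in>{\<sigma>. \<sigma> permutes (UNIV :: 'n set) \<and> all_cycles_even \<sigma>}.
              of_int (sign \<sigma>) * (\<Prod>i\<in>UNIV. Amat chi hbar q $ i $ \<sigma> i))"
proof -
  define f where "f \<sigma> = of_int (sign \<sigma>) * (\<Prod>i\<in>UNIV. Amat chi hbar q $ i $ \<sigma> i)" for \<sigma>
  define A where "A = {\<sigma>. \<sigma> permutes (UNIV :: 'n set) \<and> all_cycles_even \<sigma>}"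
  define B where "B = {\<sigma>. \<sigma> permutes (UNIV :: 'n set) \<and> \<not> all_cycles_even \<sigma>}"
  have fin: "finite {\<sigma>. \<sigma> permutes (UNIV :: 'n set)}" by (rule finite_permutations) simp
  have U: "{\<sigma>. \<sigma> permutes (UNIV :: 'n set)} = A \<union> B" unfolding A_def B_def by auto
  have "det (Amat chi hbar q) = (\<Sum>\<sigma>\<in>{\<sigma>. \<sigma> permutes (UNIV :: 'n set)}. f \<sigma>)"
    unfolding det_def f_def ..
  also have "\<dots> = (\<Sum>\<sigma>\<in>A. f \<sigma>) + (\<Sum>\<sigma>\<in>B. f \<sigma>)"
    unfolding U using fin U by (intro sum.union_disjoint) (auto simp: A_def B_def)
  also have "(\<Sum>\<sigma>\<in>B. f \<sigma>) = 0" unfolding B_def f_def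
    by (rule cancel_sum[where h = hbar and F = "\<lambda>i. 1 - q i" and G = "\<lambda>j. q j * (1 + q j)"
          and E = "\<lambda>i j. inverse ((q j - q i) * (1 - q i * q j))"])
       (simp_all add: entry_form[OF assms] algebra_simps flip: inverse_minus_eq)
  finally show ?thesis unfolding A_def f_def by simp
qed

lemma even_moved:
  fixes \<sigma> :: "'n::finite \<Rightarrow> 'n"
  assumes p: "\<sigma> permutes UNIV" and e: "all_cycles_even \<sigma>"
  shows "even (card {i. \<sigma> i \<noteq> i})"
proof -
  have P: "permutation \<sigma>" by (rule perm_univ[OF p])
  define Mv where "Mv = {i. \<sigma> i \<noteq> i}"
  define Orbs where "Orbs = (\<lambda>i. orbit \<sigma> i) ` Mv"
  have U: "\<Union>Orbs = Mv"
  proof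
    show "\<Union>Orbs \<subseteq> Mv" unfolding Orbs_def Mv_def using orb_nofix[OF P] by auto
    show "Mv \<subseteq> \<Union>Orbs" unfolding Orbs_def using permutation_self_in_orbit[OF P] by auto
  qed
  have pd: "pairwise disjnt Orbs"
    unfolding pairwise_def disjnt_def
  proof (intro ballI impI)
    fix a b assume "a \<in> Orbs" "b \<in> Orbs" "a \<noteq> b"
    then obtain i j where ij: "a = orbit \<sigma> i" "b = orbit \<sigma> j" unfolding Orbs_def by auto
    show "a \<inter> b = {}"
    proof (rule ccontr)
      assume "a \<inter> b \<noteq> {}"
      then obtain y where "y \<in> orbit \<sigma> i" "y \<in> orbit \<sigma> j" using ij by auto
      then have "orbit \<sigma> i = orbit \<sigma> j" using orb_eq[OF P, of y i] orb_eq[OF P, of y j] by simp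
      then show False using ij \<open>a \<noteq> b\<close> by simp
    qed
  qed
  have "card Mv = sum card Orbs" using card_Union_disjoint[OF pd] U by simp
  also have "even \<dots>"
  proof (rule dvd_sum)
    fix a assume "a \<in> Orbs"
    then obtain i where "i \<in> Mv" "a = orbit \<sigma> i" unfolding Orbs_def by auto
    then show "2 dvd card a" using e unfolding all_cycles_even_def Mv_def by simp
  qed
  finally show ?thesis unfolding Mv_def .
qed

lemma prod_neg:
  fixes chi :: "'n::finite \<Rightarrow> 'a::field" and hbar :: 'a and q :: "'n \<Rightarrow> 'a"
  assumes p: "\<sigma> permutes UNIV" and e: "all_cycles_even \<sigma>"
  shows "(\<Prod>i\<in>UNIV. Amat (\<lambda>i. - chi i) hbar q $ i $ \<sigma> i)
         = (-1) ^ CARD('n) * (\<Prod>i\<in>UNIV. Amat chi hbar q $ i $ \<sigma> i)"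
proof -
  define Fx where "Fx = {i. \<sigma> i = i}"
  define Mv where "Mv = {i. \<sigma> i \<noteq> i}"
  have "(\<Prod>i\<in>UNIV. Amat (\<lambda>i. - chi i) hbar q $ i $ \<sigma> i)
        = (\<Prod>i\<in>UNIV. (if \<sigma> i = i then -1 else 1) * Amat chi hbar q $ i $ \<sigma> i)"
    by (rule prod.cong) (auto simp: Amat_def)
  also have "\<dots> = (\<Prod>i\<in>UNIV. (if \<sigma> i = i then -1 else 1 :: 'a)) * (\<Prod>i\<in>UNIV. Amat chi hbar q $ i $ \<sigma> i)"
    by (rule prod.distrib)
  also have "(\<Prod>i\<in>UNIV. (if \<sigma> i = i then -1 else 1 :: 'a)) = (-1) ^ card Fx"
    unfolding Fx_def by (simp add: prod.If_cases Int_def)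
  also have "(-1::'a) ^ card Fx = (-1) ^ CARD('n)"
  proof -
    have c: "CARD('n) = card Fx + card Mv" unfolding Fx_def Mv_def
      by (subst card_Un_disjoint[symmetric]) (auto intro: arg_cong[where f = card])
    have "even (card Mv)" unfolding Mv_def by (rule even_moved[OF p e])
    then show ?thesis unfolding c by (simp add: power_add)
  qed
  finally show ?thesis .
qed

theorem mainTheorem16:
  fixes chi :: "'n::finite \<Rightarrow> 'a::field" and hbar :: 'a and q :: "'n \<Rightarrow> 'a"
  assumes "\<And>i j. i \<noteq> j \<Longrightarrow> q j \<noteq> 0 \<and> q i \<noteq> q j \<and> q i * q j \<noteq> 1"
  shows "det (Amat chi hbar q) =
           (\<Sum>\<sigma>\<in>{\<sigma>. \<sigma> permutes (UNIV :: 'n set) \<and> all_cycles_even \<sigma>}.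
              of_int (sign \<sigma>) * (\<Prod>i\<in>UNIV. Amat chi hbar q $ i $ \<sigma> i))
       \<and> det (Amat chi hbar q) = (-1) ^ CARD('n) * det (Amat (\<lambda>i. - chi i) hbar q)"
proof
  show 1: "det (Amat chi hbar q) =
           (\<Sum>\<sigma>\<in>{\<sigma>. \<sigma> permutes (UNIV :: 'n set) \<and> all_cycles_even \<sigma>}.
              of_int (sign \<sigma>) * (\<Prod>i\<in>UNIV. Amat chi hbar q $ i $ \<sigma> i))"
    by (rule det_even[OF assms])
  have "det (Amat (\<lambda>i. - chi i) hbar q) =
           (\<Sum>\<sigma>\<in>{\<sigma>. \<sigma> permutes (UNIV :: 'n set) \<and> all_cycles_even \<sigma>}.
              of_int (sign \<sigma>) * (\<Prod>i\<in>UNIV. Amat (\<lambda>i. - chi i) hbar q $ i $ \<sigma> i))"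
    by (rule det_even[OF assms])
  also have "\<dots> = (\<Sum>\<sigma>\<in>{\<sigma>. \<sigma> permutes (UNIV :: 'n set) \<and> all_cycles_even \<sigma>}.
              (-1) ^ CARD('n) * (of_int (sign \<sigma>) * (\<Prod>i\<in>UNIV. Amat chi hbar q $ i $ \<sigma> i)))"
    by (rule sum.cong) (auto simp: prod_neg)
  also have "\<dots> = (-1) ^ CARD('n) * det (Amat chi hbar q)"
    unfolding 1 by (simp add: sum_distrib_left)
  finally have "(-1) ^ CARD('n) * det (Amat (\<lambda>i. - chi i) hbar q)
        = (-1) ^ CARD('n) * ((-1) ^ CARD('n) * det (Amat chi hbar q))" by simp
  also have "\<dots> = det (Amat chi hbar q)"
    by (simp flip: power_add mult.assoc add: mult_2[symmetric])
  finally show "det (Amat chi hbar q) = (-1) ^ CARD('n) * det (Amat (\<lambda>i. - chi i) hbar q)" by simp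
qed

end
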